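(* Let $E$ be a graph, $X\subseteq {\rm Reg}(E)$, $Y={\rm Reg}(E)\setminus X$, and let $c=e_1e_2\cdots e_n$ be a cycle without exits based at a vertex $w$. Put $\mu_0=w$ and, for $1\le k<n$, $\mu_k=e_1\cdots e_k$, and let $I=\{0\}\cup\{k: 1\le k<n,\ s(e_k)\in Y\}$. Then $$wC_K^X(E)w=\Big\{\sum_{\substack{0\le i\le t_1,\ 0\le j\le t_2,\ k\in I}} l_{ijk}\, c^i\mu_k\mu_k^*(c^* )^j \ :\ l_{ijk}\in K,\ t_1,t_2\in\mathbb N\cup\{0\}\Big\},$$ where $c^0=(c^* )^0=w$.
   Context: Let $K$ be a field and $E=(E^0,E^1,r,s)$ a directed graph (vertices $E^0$, edges $E^1$, range and source maps $r,s:E^1\to E^0$; no countability or finiteness assumptions). A vertex $v$ is a sink if $s^{-1}(v)=\emptyset$ and regular if $s^{-1}(v)$ is finite and nonempty; ${\rm Reg}(E)$ is the set of regular vertices. A path of length $n\ge 1$ is a sequence $\xi_1\cdots\xi_n$ of edges with $r(\xi_i)=s(\xi_{i+1})$; vertices are paths of length $0$; ${\rm Path}(E)$ is the set of finite paths, with $s,r$ extended to paths in the obvious way. For $X\subseteq{\rm Reg}(E)$, the relative Cohn path algebra $C_K^X(E)$ is the free $K$-algebra generated by $E^0\cup E^1\cup\{e^*:e\in E^1\}$ subject to: $vw=\delta_{v,w}v$ ($v,w\in E^0$); $s(e)e=er(e)=e$ and $r(e)e^*=e^*s(e)=e^*$ ($e\in E^1$); $e^*f=\delta_{e,f}r(e)$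 ($e,f\in E^1$); $v=\sum_{e\in s^{-1}(v)}ee^*$ for every $v\in X$. For a path $\alpha=\alpha_1\cdots\alpha_n$, $\alpha^*=\alpha_n^*\cdots\alpha_1^*$, and $v^*=v$ for vertices. A closed path is a path $\alpha=e_1\cdots e_n$ ($n\ge1$) with $r(e_n)=s(e_1)$; it is a cycle if $s(e_i)\ne s(e_j)$ for $i\neq j$, and it is based at $s(e_1)$. An exit of a path $e_1\cdots e_n$ is an edge $e$ with $s(e)=s(e_i)$ for some $i$ and $e\ne e_i$. *)

theory Defs
  imports Main "HOL-Library.Function_Algebras"
begin

record ('v,'e) graph =
  verts :: "'v set"
  edges :: "'e set"
  src   :: "'e \<Rightarrow> 'v"
  rng   :: "'e \<Rightarrow> 'v"

definition wf_graph :: "('v,'e) graph \<Rightarrow> bool" where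
  "wf_graph E \<longleftrightarrow> (\<forall>e\<in>edges E. src E e \<in> verts E \<and> rng E e \<in> verts E)"

definition src_inv :: "('v,'e) graph \<Rightarrow> 'v \<Rightarrow> 'e set" where
  "src_inv E v = {e \<in> edges E. src E e = v}"

definition Reg :: "('v,'e) graph \<Rightarrow> 'v set" where
  "Reg E = {v \<in> verts E. finite (src_inv E v) \<and> src_inv E v \<noteq> {}}"

text \<open>Generators of the free algebra: vertices, edges, ghost edges.\<close>
datatype ('v,'e) gen = GV 'v | GE 'e | GG 'e

definition gen_ok :: "('v,'e) graph \<Rightarrow> ('v,'e) gen \<Rightarrow> bool" where
  "gen_ok E g = (case g of GV v \<Rightarrow> v \<in> verts E | GE e \<Rightarrow> e \<in> edges E | GG e \<Rightarrow> e \<in> edges E)"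

text \<open>The free (non-unital) K-algebra on the generators: finitely supported K-valued
  functions on nonempty words in the generators, with convolution product.\<close>
type_synonym ('v,'e,'k) fa = "('v,'e) gen list \<Rightarrow> 'k"

definition fa_elems :: "('v,'e) graph \<Rightarrow> ('v,'e,'k::field) fa set" where
  "fa_elems E = {f. finite {u. f u \<noteq> 0} \<and>
     (\<forall>u. f u \<noteq> 0 \<longrightarrow> u \<noteq> [] \<and> (\<forall>g\<in>set u. gen_ok E g))}"

definition wmono :: "('v,'e) gen list \<Rightarrow> ('v,'e,'k::field) fa" where
  "wmono u = (\<lambda>z. if z = u then 1 else 0)"

definition fmul :: "('v,'e,'k::field) fa \<Rightarrow> ('v,'e,'k) fa \<Rightarrow> ('v,'e,'k) fa" where
  "fmul f g = (\<lambda>z. \<Sum>p\<in>{(a,b). a @ b = z}. f (fst p) * g (snd p))"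

definition is_ideal :: "('v,'e) graph \<Rightarrow> ('v,'e,'k::field) fa set \<Rightarrow> bool" where
  "is_ideal E I \<longleftrightarrow> I \<subseteq> fa_elems E \<and> 0 \<in> I \<and>
     (\<forall>x\<in>I. \<forall>y\<in>I. x + y \<in> I \<and> x - y \<in> I) \<and>
     (\<forall>x\<in>I. \<forall>f\<in>fa_elems E. fmul f x \<in> I \<and> fmul x f \<in> I)"

definition cohn_rels :: "('v,'e) graph \<Rightarrow> 'v set \<Rightarrow> ('v,'e,'k::field) fa set" where
  "cohn_rels E X =
     {wmono [GV v, GV w] - (if v = w then wmono [GV v] else 0) | v w. v \<in> verts E \<and> w \<in> verts E}
   \<union> {wmono [GV (src E e), GE e] - wmono [GE e] | e. e \<in> edges E}
   \<union> {wmono [GE e, GV (rng E e)] - wmono [GE e] | e. e \<in> edges E}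
   \<union> {wmono [GV (rng E e), GG e] - wmono [GG e] | e. e \<in> edges E}
   \<union> {wmono [GG e, GV (src E e)] - wmono [GG e] | e. e \<in> edges E}
   \<union> {wmono [GG e, GE f] - (if e = f then wmono [GV (rng E e)] else 0) | e f. e \<in> edges E \<and> f \<in> edges E}
   \<union> {wmono [GV v] - (\<Sum>e\<in>src_inv E v. wmono [GE e, GG e]) | v. v \<in> X}"

definition cohn_ideal :: "('v,'e) graph \<Rightarrow> 'v set \<Rightarrow> ('v,'e,'k::field) fa set" where
  "cohn_ideal E X = \<Inter>{I. is_ideal E I \<and> cohn_rels E X \<subseteq> I}"

text \<open>Elements of C_K^X(E) are cosets of the ideal.\<close>
definition cohn_cls :: "('v,'e) graph \<Rightarrow> 'v set \<Rightarrow> ('v,'e,'k::field) fa \<Rightarrow> ('v,'e,'k) fa set" where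
  "cohn_cls E X a = {b \<in> fa_elems E. a - b \<in> cohn_ideal E X}"

definition corner :: "('v,'e) graph \<Rightarrow> 'v set \<Rightarrow> 'v \<Rightarrow> ('v,'e,'k::field) fa set set" where
  "corner E X w = {cohn_cls E X (fmul (fmul (wmono [GV w]) x) (wmono [GV w])) | x. x \<in> fa_elems E}"

definition is_cycle :: "('v,'e) graph \<Rightarrow> 'e list \<Rightarrow> bool" where
  "is_cycle E c \<longleftrightarrow> c \<noteq> [] \<and> set c \<subseteq> edges E \<and>
     (\<forall>i. Suc i < length c \<longrightarrow> rng E (c ! i) = src E (c ! Suc i)) \<and>
     rng E (last c) = src E (hd c) \<and>
     (\<forall>i<length c. \<forall>j<length c. i \<noteq> j \<longrightarrow> src E (c ! i) \<noteq> src E (c ! j))"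

definition no_exit :: "('v,'e) graph \<Rightarrow> 'e list \<Rightarrow> bool" where
  "no_exit E c \<longleftrightarrow> (\<forall>e\<in>edges E. \<forall>i<length c. src E e = src E (c ! i) \<longrightarrow> e = c ! i)"

definition cpow :: "'v \<Rightarrow> 'e list \<Rightarrow> nat \<Rightarrow> ('v,'e) gen list" where
  "cpow w c i = (if i = 0 then [GV w] else concat (replicate i (map GE c)))"

definition cpow_star :: "'v \<Rightarrow> 'e list \<Rightarrow> nat \<Rightarrow> ('v,'e) gen list" where
  "cpow_star w c j = (if j = 0 then [GV w] else concat (replicate j (rev (map GG c))))"

definition mu :: "'v \<Rightarrow> 'e list \<Rightarrow> nat \<Rightarrow> ('v,'e) gen list" where
  "mu w c k = (if k = 0 then [GV w] else map GE (take k c))"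

definition mu_star :: "'v \<Rightarrow> 'e list \<Rightarrow> nat \<Rightarrow> ('v,'e) gen list" where
  "mu_star w c k = (if k = 0 then [GV w] else rev (map GG (take k c)))"

end

theory Submission
  imports Defs
begin


definition smul :: "'k::field \<Rightarrow> ('v,'e,'k) fa \<Rightarrow> ('v,'e,'k) fa" where
  "smul a f = (\<lambda>z. a * f z)"

definition gok :: "('v,'e) graph \<Rightarrow> ('v,'e) gen list \<Rightarrow> bool" where
  "gok E u = (\<forall>g\<in>set u. gen_ok E g)"

lemma gok_simps[simp]: "gok E [] = True" "gok E (g # u) = (gen_ok E g \<and> gok E u)"
  "gok E (u @ v) = (gok E u \<and> gok E v)"
  by (auto simp: gok_def)

lemma sum_fun_apply': "(sum F S) z = sum (\<lambda>i. F i z) S"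
  by (induction S rule: infinite_finite_induct) auto

lemma splits_eq: "{(a,b). a @ b = (z::'a list)} = (\<lambda>i. (take i z, drop i z)) ` {..length z}"
proof
  show "{(a,b). a @ b = z} \<subseteq> (\<lambda>i. (take i z, drop i z)) ` {..length z}"
  proof
    fix p assume "p \<in> {(a,b). a @ b = z}"
    then obtain a b where p: "p = (a,b)" "a @ b = z" by auto
    then show "p \<in> (\<lambda>i. (take i z, drop i z)) ` {..length z}"
      by (auto intro!: image_eqI[where x="length a"])
  qed
qed auto

lemma finite_splits: "finite {(a,b). a @ b = (z::'a list)}"
  by (simp add: splits_eq)

lemma fmul_wmono: "fmul (wmono a) (wmono b) = (wmono (a @ b) :: ('v,'e,'k::field) fa)"
proof (rule ext)
  fix z
  have "fmul (wmono a) (wmono b) z = (\<Sum>p\<in>{(x,y). x @ y = z}. if (a,b) = p then (1::'k) else 0)"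
    unfolding fmul_def wmono_def by (rule sum.cong) auto
  also have "\<dots> = (if (a,b) \<in> {(x,y). x @ y = z} then 1 else 0)"
    by (rule sum.delta'[OF finite_splits])
  finally show "fmul (wmono a) (wmono b) z = (wmono (a @ b) :: ('v,'e,'k::field) fa) z"
    by (auto simp: wmono_def)
qed

lemma fmul_add_left: "fmul (f + g) h = fmul f h + fmul g h"
  by (rule ext) (simp add: fmul_def distrib_right sum.distrib)
lemma fmul_add_right: "fmul h (f + g) = fmul h f + fmul h g"
  by (rule ext) (simp add: fmul_def distrib_left sum.distrib)
lemma fmul_diff_left: "fmul (f - g) h = fmul f h - fmul g h"
  by (rule ext) (simp add: fmul_def left_diff_distrib sum_subtractf)
lemma fmul_diff_right: "fmul h (f - g) = fmul h f - fmul h g"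
  by (rule ext) (simp add: fmul_def right_diff_distrib sum_subtractf)
lemma fmul_smul_left: "fmul (smul a f) g = smul a (fmul f g)"
  by (rule ext) (simp add: fmul_def smul_def sum_distrib_left mult.assoc)
lemma fmul_smul_right: "fmul g (smul a f) = smul a (fmul g f)"
  by (rule ext) (simp add: fmul_def smul_def sum_distrib_left mult.left_commute)
lemma fmul_zero_left[simp]: "fmul 0 g = 0"
  by (rule ext) (simp add: fmul_def)
lemma fmul_zero_right[simp]: "fmul g 0 = 0"
  by (rule ext) (simp add: fmul_def)
lemma fmul_sum_left: "fmul (sum F S) g = sum (\<lambda>i. fmul (F i) g) S"
proof (induction S rule: infinite_finite_induct)
  case (infinite A) then show ?case by (metis fmul_zero_left sum.infinite)
next
  case empty show ?case by (metis fmul_zero_left sum.empty)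
next
  case (insert x F) then show ?case by (metis fmul_add_left sum.insert)
qed
lemma fmul_sum_right: "fmul g (sum F S) = sum (\<lambda>i. fmul g (F i)) S"
proof (induction S rule: infinite_finite_induct)
  case (infinite A) then show ?case by (metis fmul_zero_right sum.infinite)
next
  case empty show ?case by (metis fmul_zero_right sum.empty)
next
  case (insert x F) then show ?case by (metis fmul_add_right sum.insert)
qed

lemma smul_add: "smul a (f + g) = smul a f + smul a g"
  by (rule ext) (simp add: smul_def distrib_left)
lemma smul_diff: "smul a (f - g) = smul a f - smul a g"
  by (rule ext) (simp add: smul_def right_diff_distrib)
lemma smul_zero[simp]: "smul a 0 = 0" "smul 0 f = 0"
  by (auto simp: smul_def fun_eq_iff)
lemma smul_smul: "smul a (smul b f) = smul (a * b) f"
  by (rule ext) (simp add: smul_def mult.assoc)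
lemma smul_one[simp]: "smul 1 f = f"
  by (simp add: smul_def)
lemma smul_sum: "smul a (sum F S) = sum (\<lambda>i. smul a (F i)) S"
proof (induction S rule: infinite_finite_induct)
  case (infinite A) then show ?case by (metis smul_zero(1) sum.infinite)
next
  case empty show ?case by (metis smul_zero(1) sum.empty)
next
  case (insert x F) then show ?case by (metis smul_add sum.insert)
qed
lemma smul_sum_scalar: "smul (sum F S) f = sum (\<lambda>i. smul (F i) f) S"
  by (rule ext) (simp add: smul_def sum_fun_apply' sum_distrib_right)

lemma fa_wmono: "u \<noteq> [] \<Longrightarrow> gok E u \<Longrightarrow> wmono u \<in> fa_elems E"
  by (auto simp: fa_elems_def wmono_def gok_def)
lemma fa_add: "f \<in> fa_elems E \<Longrightarrow> g \<in> fa_elems E \<Longrightarrow> f + g \<in> fa_elems E"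
proof -
  assume f: "f \<in> fa_elems E" and g: "g \<in> fa_elems E"
  have "{u. (f + g) u \<noteq> 0} \<subseteq> {u. f u \<noteq> 0} \<union> {u. g u \<noteq> 0}" by auto
  then show ?thesis using f g unfolding fa_elems_def
    by (auto intro: finite_subset)
qed
lemma fa_smul: "f \<in> fa_elems E \<Longrightarrow> smul a f \<in> fa_elems E"
proof -
  assume f: "f \<in> fa_elems E"
  have "{u. smul a f u \<noteq> 0} \<subseteq> {u. f u \<noteq> 0}" by (auto simp: smul_def)
  then show ?thesis using f unfolding fa_elems_def
    by (auto intro: finite_subset simp: smul_def)
qed
lemma fa_zero: "0 \<in> fa_elems E"
  by (simp add: fa_elems_def)
lemma fa_sum: "(\<And>i. i \<in> S \<Longrightarrow> F i \<in> fa_elems E) \<Longrightarrow> sum F S \<in> fa_elems E"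
  by (induction S rule: infinite_finite_induct) (auto simp: fa_zero fa_add)

lemma fa_expand:
  assumes "f \<in> fa_elems E"
  shows "f = (\<Sum>u\<in>{u. f u \<noteq> 0}. smul (f u) (wmono u))"
proof (rule ext)
  fix z
  have fin: "finite {u. f u \<noteq> 0}" using assms by (simp add: fa_elems_def)
  have "(\<Sum>u\<in>{u. f u \<noteq> 0}. smul (f u) (wmono u)) z = (\<Sum>u\<in>{u. f u \<noteq> 0}. if u = z then f z else 0)"
    unfolding sum_fun_apply' by (rule sum.cong) (auto simp: smul_def wmono_def)
  also have "\<dots> = f z" using fin by simp
  finally show "f z = (\<Sum>u\<in>{u. f u \<noteq> 0}. smul (f u) (wmono u)) z" by simp
qed

lemma J_props:
  shows "0 \<in> cohn_ideal E X"
    and "x \<in> cohn_ideal E X \<Longrightarrow> y \<in> cohn_ideal E X \<Longrightarrow> x + y \<in> cohn_ideal E X"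
    and "x \<in> cohn_ideal E X \<Longrightarrow> y \<in> cohn_ideal E X \<Longrightarrow> x - y \<in> cohn_ideal E X"
    and "x \<in> cohn_ideal E X \<Longrightarrow> f \<in> fa_elems E \<Longrightarrow> fmul f x \<in> cohn_ideal E X"
    and "x \<in> cohn_ideal E X \<Longrightarrow> f \<in> fa_elems E \<Longrightarrow> fmul x f \<in> cohn_ideal E X"
    and "r \<in> cohn_rels E X \<Longrightarrow> r \<in> cohn_ideal E X"
  unfolding cohn_ideal_def is_ideal_def by blast+

definition J0 :: "('v,'e) graph \<Rightarrow> 'v set \<Rightarrow> ('v,'e,'k::field) fa set" where
  "J0 E X = {d. \<forall>a. smul a d \<in> cohn_ideal E X}"

lemma J0_J: "d \<in> J0 E X \<Longrightarrow> d \<in> cohn_ideal E X"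
  unfolding J0_def by (metis (mono_tags) mem_Collect_eq smul_one)
lemma J0_add: "x \<in> J0 E X \<Longrightarrow> y \<in> J0 E X \<Longrightarrow> x + y \<in> J0 E X"
  unfolding J0_def by (simp add: smul_add J_props)
lemma J0_diff: "x \<in> J0 E X \<Longrightarrow> y \<in> J0 E X \<Longrightarrow> x - y \<in> J0 E X"
  unfolding J0_def by (simp add: smul_diff J_props)
lemma J0_zero: "0 \<in> J0 E X"
  unfolding J0_def by (simp add: J_props)
lemma J0_smul: "x \<in> J0 E X \<Longrightarrow> smul b x \<in> J0 E X"
  unfolding J0_def by (simp add: smul_smul)
lemma J0_sum: "(\<And>i. i \<in> S \<Longrightarrow> F i \<in> J0 E X) \<Longrightarrow> sum F S \<in> J0 E X"
  by (induction S rule: infinite_finite_induct) (auto simp: J0_zero J0_add)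

definition ctx :: "('v,'e) gen list \<Rightarrow> ('v,'e) gen list \<Rightarrow> ('v,'e,'k::field) fa \<Rightarrow> ('v,'e,'k) fa" where
  "ctx al be d = (if al = [] then fmul d (wmono be) else if be = [] then fmul (wmono al) d
      else fmul (wmono al) (fmul d (wmono be)))"

lemma ctx_wmono: "al \<noteq> [] \<or> be \<noteq> [] \<Longrightarrow> ctx al be (wmono A) = wmono (al @ A @ be)"
  by (auto simp: ctx_def fmul_wmono)
lemma ctx_diff: "ctx al be (f - g) = ctx al be f - ctx al be g"
  by (auto simp: ctx_def fmul_diff_left fmul_diff_right)
lemma ctx_zero[simp]: "ctx al be 0 = 0"
  by (auto simp: ctx_def)

lemma ctx_J0:
  assumes "gok E al" "gok E be" "al \<noteq> [] \<or> be \<noteq> []" "d \<in> cohn_ideal E X"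
  shows "ctx al be d \<in> J0 E X"
  unfolding J0_def
proof (intro CollectI allI)
  fix a
  show "smul a (ctx al be d) \<in> cohn_ideal E X"
  proof (cases "al = []")
    case True
    then have "be \<noteq> []" using assms by auto
    then have "smul a (wmono be) \<in> fa_elems E" using assms by (auto intro: fa_smul fa_wmono)
    then show ?thesis using True assms by (auto simp: ctx_def fmul_smul_right[symmetric] J_props)
  next
    case False
    then have al: "smul a (wmono al) \<in> fa_elems E" using assms by (auto intro: fa_smul fa_wmono)
    show ?thesis
    proof (cases "be = []")
      case True
      then show ?thesis using False al assms by (auto simp: ctx_def fmul_smul_left[symmetric] J_props)
    next
      case False2: False
      then have "fmul d (wmono be) \<in> cohn_ideal E X" using assms by (auto intro: fa_wmono J_props)
      then show ?thesis using False False2 al by (auto simp: ctx_def fmul_smul_left[symmetric] J_props)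
    qed
  qed
qed

definition eqv :: "('v,'e) graph \<Rightarrow> 'v set \<Rightarrow> ('v,'e,'k::field) fa \<Rightarrow> ('v,'e,'k) fa \<Rightarrow> bool" where
  "eqv E X a b \<longleftrightarrow> a - b \<in> J0 E X"

lemma eqv_refl[simp]: "eqv E X a a"
  by (simp add: eqv_def J0_zero)
lemma eqv_sym: "eqv E X a b \<Longrightarrow> eqv E X b a"
proof -
  assume "eqv E X a b"
  then have "0 - (a - b) \<in> J0 E X" unfolding eqv_def by (rule J0_diff[OF J0_zero])
  then show ?thesis unfolding eqv_def by simp
qed
lemma eqv_trans: "eqv E X a b \<Longrightarrow> eqv E X b c \<Longrightarrow> eqv E X a c"
proof -
  assume "eqv E X a b" "eqv E X b c"
  then have "(a - b) + (b - c) \<in> J0 E X" unfolding eqv_def by (rule J0_add)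
  then show ?thesis unfolding eqv_def by simp
qed
lemma eqv_add: "eqv E X a b \<Longrightarrow> eqv E X a' b' \<Longrightarrow> eqv E X (a + a') (b + b')"
proof -
  assume "eqv E X a b" "eqv E X a' b'"
  then have "(a - b) + (a' - b') \<in> J0 E X" unfolding eqv_def by (rule J0_add)
  then show ?thesis unfolding eqv_def by (simp add: algebra_simps)
qed
lemma eqv_smul: "eqv E X a b \<Longrightarrow> eqv E X (smul l a) (smul l b)"
  unfolding eqv_def smul_diff[symmetric] by (rule J0_smul)
lemma eqv_sum: "(\<And>i. i \<in> S \<Longrightarrow> eqv E X (F i) (G i)) \<Longrightarrow> eqv E X (sum F S) (sum G S)"
  unfolding eqv_def sum_subtractf[symmetric] by (rule J0_sum)
lemma eqv_ctx: "gok E al \<Longrightarrow> gok E be \<Longrightarrow> al \<noteq> [] \<or> be \<noteq> [] \<Longrightarrow> eqv E X a b \<Longrightarrow>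
   eqv E X (ctx al be a) (ctx al be b)"
  unfolding eqv_def ctx_diff[symmetric] by (rule ctx_J0) (auto intro: J0_J)

lemma rw:
  assumes a: "gok E al" "gok E be" "al \<noteq> [] \<or> be \<noteq> []"
    "(wmono A - wmono B :: ('v,'e,'k::field) fa) \<in> cohn_ideal E X"
  shows "eqv E X (wmono (al @ A @ be) :: ('v,'e,'k) fa) (wmono (al @ B @ be))"
proof -
  have "ctx al be (wmono A - wmono B :: ('v,'e,'k) fa) \<in> J0 E X" by (rule ctx_J0[OF a])
  then show ?thesis unfolding eqv_def ctx_diff ctx_wmono[OF a(3)] .
qed
lemma rw0:
  assumes a: "gok E al" "gok E be" "al \<noteq> [] \<or> be \<noteq> []"
    "(wmono A :: ('v,'e,'k::field) fa) \<in> cohn_ideal E X"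
  shows "eqv E X (wmono (al @ A @ be) :: ('v,'e,'k) fa) 0"
proof -
  have "ctx al be (wmono A :: ('v,'e,'k) fa) \<in> J0 E X" by (rule ctx_J0[OF a])
  then show ?thesis unfolding eqv_def ctx_wmono[OF a(3)] by simp
qed

lemma eqv_app: "gen_ok E g \<Longrightarrow> eqv E X (wmono u :: ('v,'e,'k::field) fa) b \<Longrightarrow>
  eqv E X (wmono (u @ [g]) :: ('v,'e,'k) fa) (ctx [] [g] b)"
  using eqv_ctx[of E "[]" "[g]" X "wmono u" b] by (simp add: ctx_wmono)

lemma cls_eq: "a - b \<in> cohn_ideal E X \<Longrightarrow> cohn_cls E X a = cohn_cls E X b"
  unfolding cohn_cls_def
proof (intro Collect_cong conj_cong refl)
  fix y assume ab: "a - b \<in> cohn_ideal E X"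
  show "(a - y \<in> cohn_ideal E X) = (b - y \<in> cohn_ideal E X)"
  proof
    assume "a - y \<in> cohn_ideal E X"
    from J_props(3)[OF this ab] show "b - y \<in> cohn_ideal E X" by (simp add: algebra_simps)
  next
    assume "b - y \<in> cohn_ideal E X"
    from J_props(2)[OF this ab] show "a - y \<in> cohn_ideal E X" by (simp add: algebra_simps)
  qed
qed


fun lend :: "('v,'e) graph \<Rightarrow> ('v,'e) gen \<Rightarrow> 'v" where
  "lend E (GV v) = v" | "lend E (GE e) = rng E e" | "lend E (GG e) = src E e"
fun lstart :: "('v,'e) graph \<Rightarrow> ('v,'e) gen \<Rightarrow> 'v" where
  "lstart E (GV v) = v" | "lstart E (GE e) = src E e" | "lstart E (GG e) = rng E e"
fun isE :: "('v,'e) gen \<Rightarrow> bool" where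
  "isE (GV v) = False" | "isE (GE e) = True" | "isE (GG e) = True"

lemma lend_verts: "wf_graph E \<Longrightarrow> gen_ok E g \<Longrightarrow> lend E g \<in> verts E"
  by (cases g) (auto simp: gen_ok_def wf_graph_def)
lemma lstart_verts: "wf_graph E \<Longrightarrow> gen_ok E g \<Longrightarrow> lstart E g \<in> verts E"
  by (cases g) (auto simp: gen_ok_def wf_graph_def)

lemma rel1: "v \<in> verts E \<Longrightarrow> v' \<in> verts E \<Longrightarrow>
  (wmono [GV v, GV v'] - (if v = v' then wmono [GV v] else 0) :: ('v,'e,'k::field) fa) \<in> cohn_ideal E X"
  by (rule J_props(6)) (unfold cohn_rels_def, blast)
lemma rel2: "e \<in> edges E \<Longrightarrow>
  (wmono [GV (src E e), GE e] - wmono [GE e] :: ('v,'e,'k::field) fa) \<in> cohn_ideal E X"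
  by (rule J_props(6)) (unfold cohn_rels_def, blast)
lemma rel3: "e \<in> edges E \<Longrightarrow>
  (wmono [GE e, GV (rng E e)] - wmono [GE e] :: ('v,'e,'k::field) fa) \<in> cohn_ideal E X"
  by (rule J_props(6)) (unfold cohn_rels_def, blast)
lemma rel4: "e \<in> edges E \<Longrightarrow>
  (wmono [GV (rng E e), GG e] - wmono [GG e] :: ('v,'e,'k::field) fa) \<in> cohn_ideal E X"
  by (rule J_props(6)) (unfold cohn_rels_def, blast)
lemma rel5: "e \<in> edges E \<Longrightarrow>
  (wmono [GG e, GV (src E e)] - wmono [GG e] :: ('v,'e,'k::field) fa) \<in> cohn_ideal E X"
  by (rule J_props(6)) (unfold cohn_rels_def, blast)
lemma rel6: "e \<in> edges E \<Longrightarrow> f \<in> edges E \<Longrightarrow>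
  (wmono [GG e, GE f] - (if e = f then wmono [GV (rng E e)] else 0) :: ('v,'e,'k::field) fa) \<in> cohn_ideal E X"
  by (rule J_props(6)) (unfold cohn_rels_def, blast)
lemma rel7: "v \<in> X \<Longrightarrow>
  (wmono [GV v] - (\<Sum>e\<in>src_inv E v. wmono [GE e, GG e]) :: ('v,'e,'k::field) fa) \<in> cohn_ideal E X"
  by (rule J_props(6)) (unfold cohn_rels_def, blast)

lemma R_end: assumes "wf_graph E" "gen_ok E g"
  shows "(wmono [g, GV (lend E g)] - wmono [g] :: ('v,'e,'k::field) fa) \<in> cohn_ideal E X"
proof (cases g)
  case (GV v)
  then have "v \<in> verts E" using assms by (simp add: gen_ok_def)
  from rel1[OF this this] show ?thesis using GV by simp
next
  case (GE e) then show ?thesis using assms rel3 by (simp add: gen_ok_def)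
next
  case (GG e) then show ?thesis using assms rel5 by (simp add: gen_ok_def)
qed

lemma R_start: assumes "wf_graph E" "gen_ok E g"
  shows "(wmono [GV (lstart E g), g] - wmono [g] :: ('v,'e,'k::field) fa) \<in> cohn_ideal E X"
proof (cases g)
  case (GV v)
  then have "v \<in> verts E" using assms by (simp add: gen_ok_def)
  from rel1[OF this this] show ?thesis using GV by simp
next
  case (GE e) then show ?thesis using assms rel2 by (simp add: gen_ok_def)
next
  case (GG e) then show ?thesis using assms rel4 by (simp add: gen_ok_def)
qed

fun coh :: "('v,'e) graph \<Rightarrow> ('v,'e) gen list \<Rightarrow> bool" where
  "coh E [] = True" | "coh E [x] = True" | "coh E (x # y # z) = (lend E x = lstart E y \<and> coh E (y # z))"

lemma coh_Cons: "coh E (x # z) = ((z \<noteq> [] \<longrightarrow> lend E x = lstart E (hd z)) \<and> coh E z)"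
  by (cases z) auto

lemma coh_append: "coh E (x @ y) = (coh E x \<and> coh E y \<and> (x \<noteq> [] \<longrightarrow> y \<noteq> [] \<longrightarrow> lend E (last x) = lstart E (hd y)))"
  by (induction x) (auto simp: coh_Cons)

fun epath :: "('v,'e) graph \<Rightarrow> 'e list \<Rightarrow> bool" where
  "epath E [] = True" | "epath E [e] = True" | "epath E (e # f # r) = (rng E e = src E f \<and> epath E (f # r))"

lemma epath_Cons: "epath E (e # q) = ((q \<noteq> [] \<longrightarrow> rng E e = src E (hd q)) \<and> epath E q)"
  by (cases q) auto

lemma epath_append: "epath E (x @ y) = (epath E x \<and> epath E y \<and> (x \<noteq> [] \<longrightarrow> y \<noteq> [] \<longrightarrow> rng E (last x) = src E (hd y)))"
  by (induction x) (auto simp: epath_Cons)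

lemma coh_map_GE: "coh E (map GE p) = epath E p"
  by (induction p) (auto simp: coh_Cons epath_Cons hd_map)

lemma coh_rev_GG: "coh E (rev (map GG p)) = epath E p"
  by (induction p) (auto simp: coh_append epath_Cons last_rev hd_map)

lemma L1:
  assumes wf: "wf_graph E" and p2: "2 \<le> length p" and gp: "gok E p"
  shows "gok E y \<Longrightarrow> coh E (p @ y) \<Longrightarrow>
     eqv E X (wmono (p @ y) :: ('v,'e,'k::field) fa) (wmono (p @ filter isE y))"
proof (induction "length y" arbitrary: y rule: less_induct)
  case less
  show ?case
  proof (cases "\<forall>g\<in>set y. isE g")
    case True
    then have "filter isE y = y" by simp
    then show ?thesis by simp
  next
    case False
    then obtain g where g: "g \<in> set y" "\<not> isE g" by blast
    obtain v where gv: "g = GV v" using g(2) by (cases g) auto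
    from g(1) obtain al be where y: "y = al @ g # be" by (meson split_list)
    define P where "P = p @ al"
    have Pne: "butlast P \<noteq> []" using p2 unfolding P_def
      by (cases al rule: rev_cases) (auto simp: butlast_append, cases p rule: rev_cases, auto)
    have P: "P = butlast P @ [last P]" using Pne by (metis append_butlast_last_id butlast.simps(1))
    have cohy: "coh E (P @ GV v # be)" using less.prems(2) y gv P_def by simp
    then have c1: "coh E P" "coh E (GV v # be)" "lend E (last P) = v"
      using Pne by (auto simp: coh_append)
    have gP: "gok E P" using gp less.prems(1) y P_def by simp
    have glP: "gen_ok E (last P)" using gP Pne by (metis P gok_def in_set_conv_decomp)
    have gbe: "gok E be" using less.prems(1) y by simp
    have "eqv E X (wmono (butlast P @ [last P, GV (lend E (last P))] @ be) :: ('v,'e,'k::field) fa)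
        (wmono (butlast P @ [last P] @ be))"
      by (rule rw) (use gP gbe Pne R_end[OF wf glP] in \<open>auto simp: gok_def in_set_butlastD\<close>)
    also have "butlast P @ [last P, GV (lend E (last P))] @ be = p @ y"
      using P c1 y gv P_def by (metis append_Cons append_assoc append_self_conv2)
    also have "butlast P @ [last P] @ be = p @ (al @ be)"
      using P P_def by (metis append_assoc)
    finally have e1: "eqv E X (wmono (p @ y) :: ('v,'e,'k::field) fa) (wmono (p @ (al @ be)))" .
    have "coh E (p @ (al @ be))"
      using c1 Pne unfolding P_def[symmetric] append_assoc[symmetric]
      by (auto simp: coh_append coh_Cons)
    moreover have "gok E (al @ be)" using less.prems(1) y by simp
    moreover have "length (al @ be) < length y" using y by simp
    ultimately have e2: "eqv E X (wmono (p @ (al @ be)) :: ('v,'e,'k::field) fa) (wmono (p @ filter isE (al @ be)))"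
      using less.hyps by blast
    have "filter isE (al @ be) = filter isE y" using y g by simp
    then show ?thesis using eqv_trans[OF e1 e2] by simp
  qed
qed

lemma absorb:
  assumes wf: "wf_graph E" and "gok E V" "2 \<le> length V" "gok E be"
  shows "eqv E X (wmono (V @ GV (lend E (last V)) # be) :: ('v,'e,'k::field) fa) (wmono (V @ be))"
proof -
  have Pne: "butlast V \<noteq> []" using assms(3) by (cases V rule: rev_cases) auto
  have P: "V = butlast V @ [last V]" using Pne by (metis append_butlast_last_id butlast.simps(1))
  have glP: "gen_ok E (last V)" using assms(2) Pne by (metis P gok_def in_set_conv_decomp)
  have "eqv E X (wmono (butlast V @ [last V, GV (lend E (last V))] @ be) :: ('v,'e,'k::field) fa)
        (wmono (butlast V @ [last V] @ be))"
    by (rule rw) (use assms Pne R_end[OF wf glP] in \<open>auto simp: gok_def in_set_butlastD\<close>)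
  then show ?thesis using P by (metis append_Cons append_assoc append_self_conv2)
qed

lemma kill:
  assumes wf: "wf_graph E" and gV: "gok E V" and lV: "2 \<le> length V" and gl: "gen_ok E l"
    and ne: "lstart E l \<noteq> lend E (last V)"
  shows "eqv E X (wmono (V @ [l]) :: ('v,'e,'k::field) fa) 0"
proof -
  define t where "t = lend E (last V)"
  have Vne: "V \<noteq> []" using lV by auto
  have glV: "gen_ok E (last V)" using gV Vne by (simp add: gok_def)
  have tv: "t \<in> verts E" using lend_verts[OF wf glV] t_def by simp
  have sv: "lstart E l \<in> verts E" using lstart_verts[OF wf gl] .
  have e1: "eqv E X (wmono (V @ [l]) :: ('v,'e,'k::field) fa) (wmono (V @ GV t # [l]))"
    using absorb[OF wf gV lV, of "[l]" X] gl t_def by (auto intro: eqv_sym)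
  have "eqv E X (wmono ((V @ [GV t]) @ [GV (lstart E l), l] @ []) :: ('v,'e,'k::field) fa)
          (wmono ((V @ [GV t]) @ [l] @ []))"
    by (rule rw) (use gV gl tv R_start[OF wf gl] in \<open>auto simp: gen_ok_def\<close>)
  then have e2: "eqv E X (wmono (V @ GV t # [l]) :: ('v,'e,'k::field) fa) (wmono (V @ [GV t, GV (lstart E l)] @ [l]))"
    by (auto intro: eqv_sym)
  have "(wmono [GV t, GV (lstart E l)] :: ('v,'e,'k::field) fa) \<in> cohn_ideal E X"
    using rel1[OF tv sv, where 'k='k and X=X] ne t_def by simp
  then have e3: "eqv E X (wmono (V @ [GV t, GV (lstart E l)] @ [l]) :: ('v,'e,'k::field) fa) 0"
    by (rule rw0[rotated 3]) (use gV gl Vne in auto)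
  show ?thesis using eqv_trans[OF e1 eqv_trans[OF e2 e3]] .
qed

lemma cancel:
  assumes "gok E V" "2 \<le> length V" "last V = GG e" "e \<in> edges E"
  shows "eqv E X (wmono (V @ [GE e]) :: ('v,'e,'k::field) fa) (wmono (butlast V @ [GV (rng E e)]))"
proof -
  have Pne: "butlast V \<noteq> []" using assms(2) by (cases V rule: rev_cases) auto
  have P: "V = butlast V @ [GG e]" using Pne assms(3) by (metis append_butlast_last_id butlast.simps(1))
  have "eqv E X (wmono (butlast V @ [GG e, GE e] @ []) :: ('v,'e,'k::field) fa) (wmono (butlast V @ [GV (rng E e)] @ []))"
    by (rule rw) (use assms Pne rel6[OF assms(4) assms(4), where 'k='k and X=X] in \<open>auto simp: gok_def in_set_butlastD\<close>)
  then show ?thesis using P by (metis append_Cons append_Nil append_assoc append_Nil2)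
qed

lemma kill2:
  assumes "gok E V" "2 \<le> length V" "last V = GG e" "e \<in> edges E" "f \<in> edges E" "f \<noteq> e"
  shows "eqv E X (wmono (V @ [GE f]) :: ('v,'e,'k::field) fa) 0"
proof -
  have Pne: "butlast V \<noteq> []" using assms(2) by (cases V rule: rev_cases) auto
  have P: "V = butlast V @ [GG e]" using Pne assms(3) by (metis append_butlast_last_id butlast.simps(1))
  have "(wmono [GG e, GE f] :: ('v,'e,'k::field) fa) \<in> cohn_ideal E X"
    using rel6[OF assms(4) assms(5), where 'k='k and X=X] assms(6) by simp
  then have "eqv E X (wmono (butlast V @ [GG e, GE f] @ []) :: ('v,'e,'k::field) fa) 0"
    by (rule rw0[rotated 3]) (use assms Pne in \<open>auto simp: gok_def in_set_butlastD\<close>)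
  then show ?thesis using P by (metis append_Cons append_Nil append_assoc append_Nil2)
qed


lemma gok_map_GE[simp]: "gok E (map GE xs) = (set xs \<subseteq> edges E)"
  by (auto simp: gok_def gen_ok_def)
lemma gok_map_GG[simp]: "gok E (map GG xs) = (set xs \<subseteq> edges E)"
  by (auto simp: gok_def gen_ok_def)
lemma gok_rev[simp]: "gok E (rev xs) = gok E xs"
  by (auto simp: gok_def)

locale cs =
  fixes E :: "('v,'e) graph" and X :: "'v set" and c :: "'e list" and w :: 'v
  assumes wf: "wf_graph E" and XR: "X \<subseteq> Reg E" and cyc: "is_cycle E c" and nex: "no_exit E c"
    and wdef: "w = src E (hd c)"
begin

definition cy :: "nat \<Rightarrow> 'e list" where "cy m = map (\<lambda>i. c ! (i mod length c)) [0..<m]"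
definition pv :: "nat \<Rightarrow> 'v" where "pv m = src E (c ! (m mod length c))"

lemma npos: "0 < length c" using cyc by (simp add: is_cycle_def)
lemma c_edge: "c ! (i mod length c) \<in> edges E"
  using cyc npos by (auto simp: is_cycle_def)
lemma cy_edges: "set (cy m) \<subseteq> edges E"
  using c_edge by (auto simp: cy_def)
lemma pv_verts: "pv m \<in> verts E"
  using c_edge wf by (auto simp: pv_def wf_graph_def)
lemma pv0: "pv 0 = w"
  using npos by (simp add: pv_def wdef hd_conv_nth)
lemma w_verts: "w \<in> verts E" using pv_verts pv0 by metis
lemma pv_mult: "pv (i * length c) = w"
  using pv0 by (simp add: pv_def)

lemma rng_c: "rng E (c ! (i mod length c)) = pv (Suc i)"
proof -
  let ?n = "length c" let ?m = "i mod ?n"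
  have m: "?m < ?n" using npos by simp
  show ?thesis
  proof (cases "Suc ?m < ?n")
    case True
    then have "rng E (c ! ?m) = src E (c ! Suc ?m)" using cyc by (simp add: is_cycle_def)
    moreover have "Suc i mod ?n = Suc ?m" using True by (simp add: mod_Suc)
    ultimately show ?thesis by (simp add: pv_def)
  next
    case False
    then have sm: "Suc ?m = ?n" using m by simp
    then have "?m = length c - 1" by simp
    then have "c ! ?m = last c" using npos by (simp add: last_conv_nth)
    moreover have "Suc i mod ?n = 0" using sm by (simp add: mod_Suc)
    ultimately show ?thesis using cyc npos by (simp add: pv_def is_cycle_def hd_conv_nth)
  qed
qed

lemma pv_eq: "pv x = pv y \<Longrightarrow> x mod length c = y mod length c"
  using cyc npos unfolding pv_def is_cycle_def by (meson mod_less_divisor)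

lemma nex': "f \<in> edges E \<Longrightarrow> src E f = pv m \<Longrightarrow> f = c ! (m mod length c)"
  using nex npos unfolding no_exit_def pv_def by auto

lemma src_inv_pv: "src_inv E (pv m) = {c ! (m mod length c)}"
  using nex' c_edge by (auto simp: src_inv_def pv_def)

lemma pv_Reg: "pv m \<in> Reg E"
  using src_inv_pv pv_verts by (simp add: Reg_def)

lemma cy_Suc: "cy (Suc m) = cy m @ [c ! (m mod length c)]"
  by (simp add: cy_def)
lemma cy_0[simp]: "cy 0 = []"
  by (simp add: cy_def)
lemma cy_len[simp]: "length (cy m) = m"
  by (simp add: cy_def)
lemma cy_nth: "t < m \<Longrightarrow> cy m ! t = c ! (t mod length c)"
  by (simp add: cy_def)

lemma cy_add: "cy (x + y) = cy x @ map (\<lambda>i. c ! ((x + i) mod length c)) [0..<y]"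
  by (induction y) (simp_all add: cy_Suc)

lemma cy_mult: "cy (i * length c + k) = cy (i * length c) @ cy k"
  unfolding cy_add by (simp add: cy_def)

lemma cy_n: "cy (i * length c) = concat (replicate i c)"
proof (induction i)
  case (Suc i)
  have "cy (Suc i * length c) = cy (i * length c + length c)" by (simp add: add.commute)
  also have "\<dots> = cy (i * length c) @ c"
  proof -
    have "map (\<lambda>t. c ! ((i * length c + t) mod length c)) [0..<length c] = c"
      by (rule nth_equalityI) auto
    then show ?thesis unfolding cy_add by simp
  qed
  also have "\<dots> = concat (replicate (Suc i) c)"
    using Suc by (simp add: replicate_append_same[symmetric] del: replicate_append_same)
  finally show ?case .
qed simp

lemma cy_take: "k \<le> length c \<Longrightarrow> cy k = take k c"
  by (rule nth_equalityI) (auto simp: cy_nth)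

lemma cy_hd: "0 < m \<Longrightarrow> hd (cy m) = c ! 0"
  by (simp add: cy_def hd_map npos)
lemma cy_last: "0 < m \<Longrightarrow> last (cy m) = c ! ((m - 1) mod length c)"
  by (cases m) (auto simp: cy_Suc)
lemma rng_last_cy: "0 < m \<Longrightarrow> rng E (last (cy m)) = pv m"
  by (simp add: cy_last rng_c)

lemma epath_cy: "epath E (cy m)"
proof (induction m)
  case (Suc m)
  then show ?case
    by (cases "m = 0") (auto simp: cy_Suc epath_append rng_last_cy pv_def)
qed simp

lemma path_nth: "epath E q \<Longrightarrow> set q \<subseteq> edges E \<Longrightarrow> q \<noteq> [] \<Longrightarrow> src E (hd q) = pv m \<Longrightarrow>
   \<forall>i<length q. q ! i = c ! ((m + i) mod length c)"
proof (induction q arbitrary: m)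
  case (Cons e q)
  have e: "e = c ! (m mod length c)" using Cons.prems nex' by auto
  show ?case
  proof (cases "q = []")
    case True then show ?thesis using e by simp
  next
    case False
    have "src E (hd q) = rng E e" using Cons.prems(1) False by (simp add: epath_Cons)
    also have "\<dots> = pv (Suc m)" using e rng_c by simp
    finally have "\<forall>i<length q. q ! i = c ! ((Suc m + i) mod length c)"
      using Cons.IH[of "Suc m"] Cons.prems False by (simp add: epath_Cons)
    then show ?thesis using e by (auto simp: nth_Cons split: nat.splits)
  qed
qed simp

lemma path_cy: "epath E q \<Longrightarrow> set q \<subseteq> edges E \<Longrightarrow> q \<noteq> [] \<Longrightarrow> src E (hd q) = w \<Longrightarrow> q = cy (length q)"
  using path_nth[of q 0] pv0 by (intro nth_equalityI) (auto simp: cy_nth)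

definition SW :: "nat \<Rightarrow> 'e list \<Rightarrow> ('v,'e) gen list" where
  "SW a q = GV w # GV w # map GE (cy a) @ rev (map GG q)"
definition valid :: "nat \<Rightarrow> 'e list \<Rightarrow> bool" where
  "valid a q \<longleftrightarrow> set q \<subseteq> edges E \<and> epath E q \<and> (q \<noteq> [] \<longrightarrow> rng E (last q) = pv a)"
definition endv :: "nat \<Rightarrow> 'e list \<Rightarrow> 'v" where
  "endv a q = (if q = [] then pv a else src E (hd q))"

lemma SW_gok: "set q \<subseteq> edges E \<Longrightarrow> gok E (SW a q)"
  using cy_edges w_verts by (simp add: SW_def gen_ok_def)
lemma SW_len: "2 \<le> length (SW a q)"
  by (simp add: SW_def)
lemma SW_last: "lend E (last (SW a q)) = endv a q"
proof (cases "q = []")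
  case True
  then show ?thesis
    by (cases a) (auto simp: SW_def endv_def pv0 cy_Suc rng_c)
next
  case False
  then show ?thesis by (simp add: SW_def endv_def last_rev hd_map)
qed

lemma endv_verts: "valid a q \<Longrightarrow> endv a q \<in> verts E"
  using pv_verts wf by (cases q) (auto simp: endv_def valid_def wf_graph_def)

lemma step_GV:
  assumes "valid a q" "v \<in> verts E"
  shows "eqv E X (wmono (SW a q @ [GV v]) :: ('v,'e,'k::field) fa) 0 \<or>
    (endv a q = v \<and> eqv E X (wmono (SW a q @ [GV v]) :: ('v,'e,'k) fa) (wmono (SW a q)))"
proof (cases "v = endv a q")
  case True
  have "eqv E X (wmono (SW a q @ GV (lend E (last (SW a q))) # []) :: ('v,'e,'k) fa) (wmono (SW a q @ []))"
    by (rule absorb[OF wf SW_gok SW_len]) (use assms in \<open>auto simp: valid_def\<close>)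
  then show ?thesis using True SW_last by simp
next
  case False
  have "eqv E X (wmono (SW a q @ [GV v]) :: ('v,'e,'k) fa) 0"
    by (rule kill[OF wf SW_gok SW_len]) (use assms False SW_last in \<open>auto simp: valid_def gen_ok_def\<close>)
  then show ?thesis by simp
qed

lemma step_GE:
  assumes "valid a q" "f \<in> edges E"
  shows "eqv E X (wmono (SW a q @ [GE f]) :: ('v,'e,'k::field) fa) 0 \<or>
    (\<exists>a' q'. valid a' q' \<and> eqv E X (wmono (SW a q @ [GE f]) :: ('v,'e,'k) fa) (wmono (SW a' q')))"
proof (cases q)
  case Nil
  show ?thesis
  proof (cases "src E f = pv a")
    case True
    then have "f = c ! (a mod length c)" using nex' assms by simp
    then have "SW a q @ [GE f] = SW (Suc a) []" using Nil by (simp add: SW_def cy_Suc)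
    moreover have "valid (Suc a) []" by (simp add: valid_def)
    ultimately show ?thesis by fastforce
  next
    case False
    have "eqv E X (wmono (SW a q @ [GE f]) :: ('v,'e,'k) fa) 0"
      by (rule kill[OF wf SW_gok SW_len]) (use assms False SW_last Nil in \<open>auto simp: valid_def gen_ok_def endv_def\<close>)
    then show ?thesis by simp
  qed
next
  case (Cons e q2)
  have V: "SW a q = SW a q2 @ [GG e]" using Cons by (simp add: SW_def)
  have e: "e \<in> edges E" using assms Cons by (simp add: valid_def)
  have lastV: "last (SW a q) = GG e" using V by simp
  have gV: "gok E (SW a q)" using assms by (intro SW_gok) (simp add: valid_def)
  show ?thesis
  proof (cases "f = e")
    case False
    then show ?thesis using kill2[OF gV SW_len lastV e assms(2)] by blast
  next
    case True
    have v2: "valid a q2" using assms Cons by (auto simp: valid_def epath_Cons)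
    have re: "rng E e = endv a q2" using assms Cons
      by (cases q2) (auto simp: valid_def endv_def epath_Cons)
    have e1: "eqv E X (wmono (SW a q @ [GE f]) :: ('v,'e,'k) fa) (wmono (SW a q2 @ [GV (rng E e)]))"
      using cancel[OF gV SW_len lastV e] True V by simp
    have "eqv E X (wmono (SW a q2 @ GV (lend E (last (SW a q2))) # []) :: ('v,'e,'k) fa) (wmono (SW a q2 @ []))"
      by (rule absorb[OF wf SW_gok SW_len]) (use v2 in \<open>auto simp: valid_def\<close>)
    then have e2: "eqv E X (wmono (SW a q2 @ [GV (rng E e)]) :: ('v,'e,'k) fa) (wmono (SW a q2))"
      using re SW_last by simp
    show ?thesis using eqv_trans[OF e1 e2] v2 by blast
  qed
qed

lemma step_GG:
  assumes "valid a q" "f \<in> edges E"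
  shows "eqv E X (wmono (SW a q @ [GG f]) :: ('v,'e,'k::field) fa) 0 \<or>
    (\<exists>a' q'. valid a' q' \<and> eqv E X (wmono (SW a q @ [GG f]) :: ('v,'e,'k) fa) (wmono (SW a' q')))"
proof (cases "rng E f = endv a q")
  case True
  then have "SW a q @ [GG f] = SW a (f # q)" by (simp add: SW_def)
  moreover have "valid a (f # q)" using assms True
    by (auto simp: valid_def epath_Cons endv_def)
  ultimately show ?thesis by (metis eqv_refl)
next
  case False
  have "eqv E X (wmono (SW a q @ [GG f]) :: ('v,'e,'k) fa) 0"
    by (rule kill[OF wf SW_gok SW_len]) (use assms False SW_last in \<open>auto simp: valid_def gen_ok_def\<close>)
  then show ?thesis by simp
qed

lemma step:
  assumes "valid a q" "gen_ok E g"
  shows "eqv E X (wmono (SW a q @ [g]) :: ('v,'e,'k::field) fa) 0 \<or>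
    (\<exists>a' q'. valid a' q' \<and> eqv E X (wmono (SW a q @ [g]) :: ('v,'e,'k) fa) (wmono (SW a' q')))"
proof (cases g)
  case (GV v)
  then show ?thesis using step_GV[of a q v] assms by (auto simp: gen_ok_def)
next
  case (GE f)
  then show ?thesis using step_GE[of a q f] assms by (auto simp: gen_ok_def)
next
  case (GG f)
  then show ?thesis using step_GG[of a q f] assms by (auto simp: gen_ok_def)
qed

lemma reduce_main:
  "gok E u \<Longrightarrow> eqv E X (wmono (GV w # GV w # u) :: ('v,'e,'k::field) fa) 0 \<or>
    (\<exists>a q. valid a q \<and> eqv E X (wmono (GV w # GV w # u) :: ('v,'e,'k) fa) (wmono (SW a q)))"
proof (induction u rule: rev_induct)
  case Nil
  have "SW 0 [] = [GV w, GV w]" by (simp add: SW_def)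
  moreover have "valid 0 []" by (simp add: valid_def)
  ultimately show ?case by (metis eqv_refl)
next
  case (snoc g u)
  then have g: "gen_ok E g" and u: "gok E u" by auto
  from snoc.IH[OF u] show ?case
  proof
    assume "eqv E X (wmono (GV w # GV w # u) :: ('v,'e,'k) fa) 0"
    from eqv_app[OF g this] have "eqv E X (wmono (GV w # GV w # u @ [g]) :: ('v,'e,'k) fa) 0"
      by (simp only: ctx_zero append_Cons)
    then show ?thesis by blast
  next
    assume "\<exists>a q. valid a q \<and> eqv E X (wmono (GV w # GV w # u) :: ('v,'e,'k) fa) (wmono (SW a q))"
    then obtain a q where aq: "valid a q" "eqv E X (wmono (GV w # GV w # u) :: ('v,'e,'k) fa) (wmono (SW a q))"
      by blast
    from eqv_app[OF g aq(2)] have e1: "eqv E X (wmono (GV w # GV w # u @ [g]) :: ('v,'e,'k) fa) (wmono (SW a q @ [g]))"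
      by (simp add: ctx_wmono)
    from step[OF aq(1) g] show ?thesis
      using eqv_trans[OF e1] by blast
  qed
qed

lemma final_shape:
  assumes "valid a q" "endv a q = w"
  shows "\<exists>b. q = cy b \<and> a mod length c = b mod length c"
proof (cases "q = []")
  case True
  then have "pv a = pv 0" using assms pv0 by (simp add: endv_def)
  then show ?thesis using True pv_eq by (intro exI[of _ 0]) auto
next
  case False
  then have q: "q = cy (length q)" using assms path_cy by (auto simp: valid_def endv_def)
  have "pv (length q) = pv a" using assms False rng_last_cy[of "length q"] q
    by (metis valid_def length_greater_0_conv)
  then show ?thesis using q pv_eq by metis
qed

definition Iset :: "nat set" where
  "Iset = {0} \<union> {k. 1 \<le> k \<and> k < length c \<and> src E (c ! (k - 1)) \<in> Reg E - X}"

lemma Iset_fin: "finite Iset"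
proof -
  have "Iset \<subseteq> {..<length c}" using npos by (auto simp: Iset_def)
  then show ?thesis by (rule finite_subset) simp
qed

lemma Iset_lt: "k \<in> Iset \<Longrightarrow> k < length c"
  using npos by (auto simp: Iset_def)

lemma inorm_aux:
  "\<forall>a b. a mod length c = k \<longrightarrow> b mod length c = k \<longrightarrow>
    (\<exists>a' b'. a' mod length c = b' mod length c \<and> a' mod length c \<in> Iset \<and>
      eqv E X (wmono (SW a (cy b)) :: ('v,'e,'k::field) fa) (wmono (SW a' (cy b'))))"
proof (induction k)
  case 0
  show ?case
  proof (intro allI impI)
    fix a b assume "a mod length c = 0" "b mod length c = 0"
    then show "\<exists>a' b'. a' mod length c = b' mod length c \<and> a' mod length c \<in> Iset \<and>
      eqv E X (wmono (SW a (cy b)) :: ('v,'e,'k::field) fa) (wmono (SW a' (cy b')))"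
      by (intro exI[of _ a] exI[of _ b] conjI eqv_refl) (auto simp: Iset_def)
  qed
next
  case (Suc k)
  show ?case
  proof (intro allI impI)
    fix a b assume a: "a mod length c = Suc k" and b: "b mod length c = Suc k"
    show "\<exists>a' b'. a' mod length c = b' mod length c \<and> a' mod length c \<in> Iset \<and>
      eqv E X (wmono (SW a (cy b)) :: ('v,'e,'k::field) fa) (wmono (SW a' (cy b')))"
    proof (cases "Suc k \<in> Iset")
      case True
      then show ?thesis using a b by (intro exI[of _ a] exI[of _ b]) auto
    next
      case False
      have sk: "Suc k < length c" using a npos by (metis mod_less_divisor)
      have "src E (c ! k) \<notin> Reg E - X" using False sk by (simp add: Iset_def)
      moreover have "src E (c ! k) \<in> Reg E" using pv_Reg[of k] sk by (simp add: pv_def)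
      ultimately have inX: "src E (c ! k) \<in> X" by blast
      obtain a1 where a1: "a = Suc a1" using a by (cases a) auto
      obtain b1 where b1: "b = Suc b1" using b by (cases b) auto
      have a1m: "a1 mod length c = k" using a a1 sk by (simp add: mod_Suc split: if_splits)
      have b1m: "b1 mod length c = k" using b b1 sk by (simp add: mod_Suc split: if_splits)
      define e where "e = c ! k"
      define rest :: "('v,'e) gen list" where "rest = rev (map GG (cy b1))"
      have SWeq: "SW a (cy b) = SW a1 [] @ [GE e, GG e] @ rest"
        using a1 b1 a1m b1m by (simp add: SW_def cy_Suc e_def rest_def)
      have v: "pv a1 = src E e" using a1m by (simp add: pv_def e_def)
      have si: "src_inv E (pv a1) = {e}" using src_inv_pv[of a1] a1m by (simp add: e_def)
      have r7: "(wmono [GV (pv a1)] - wmono [GE e, GG e] :: ('v,'e,'k) fa) \<in> cohn_ideal E X"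
        using rel7[of "pv a1" X E] inX si v by (simp add: e_def)
      have ee: "e \<in> edges E" using c_edge[of k] sk by (simp add: e_def)
      have grest: "gok E rest" using cy_edges by (simp add: rest_def)
      have gS: "gok E (SW a1 [])" by (rule SW_gok) simp
      have e1: "eqv E X (wmono (SW a1 [] @ [GV (pv a1)] @ rest) :: ('v,'e,'k) fa) (wmono (SW a1 [] @ [GE e, GG e] @ rest))"
        by (rule rw[OF gS grest _ r7]) (simp add: SW_def)
      have "eqv E X (wmono (SW a1 [] @ GV (lend E (last (SW a1 []))) # rest) :: ('v,'e,'k) fa) (wmono (SW a1 [] @ rest))"
        by (rule absorb[OF wf gS SW_len grest])
      then have e2: "eqv E X (wmono (SW a1 [] @ [GV (pv a1)] @ rest) :: ('v,'e,'k) fa) (wmono (SW a1 (cy b1)))"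
        using SW_last[of a1 "[]"] by (simp add: endv_def SW_def rest_def)
      have e3: "eqv E X (wmono (SW a (cy b)) :: ('v,'e,'k) fa) (wmono (SW a1 (cy b1)))"
        using eqv_trans[OF eqv_sym[OF e1] e2] SWeq by simp
      from Suc.IH a1m b1m obtain a' b' where ab': "a' mod length c = b' mod length c" "a' mod length c \<in> Iset"
        "eqv E X (wmono (SW a1 (cy b1)) :: ('v,'e,'k) fa) (wmono (SW a' (cy b')))" by blast
      show ?thesis using ab' eqv_trans[OF e3 ab'(3)] by blast
    qed
  qed
qed

lemma inorm:
  "a mod length c = b mod length c \<Longrightarrow>
    \<exists>a' b'. a' mod length c = b' mod length c \<and> a' mod length c \<in> Iset \<and>
      eqv E X (wmono (SW a (cy b)) :: ('v,'e,'k::field) fa) (wmono (SW a' (cy b')))"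
  using inorm_aux by blast

end


context cs
begin

definition Tw :: "nat \<Rightarrow> nat \<Rightarrow> nat \<Rightarrow> ('v,'e) gen list" where
  "Tw i j k = cpow w c i @ mu w c k @ mu_star w c k @ cpow_star w c j"
definition GEc :: "nat \<Rightarrow> ('v,'e) gen list" where
  "GEc m = (if m = 0 then [GV w] else map GE (cy m))"
definition GGc :: "nat \<Rightarrow> ('v,'e) gen list" where
  "GGc m = (if m = 0 then [GV w] else rev (map GG (cy m)))"

lemma cpow_GEc: "cpow w c i = GEc (i * length c)"
  unfolding cpow_def GEc_def using npos by (simp add: cy_n map_concat)
lemma mu_GEc: "k \<le> length c \<Longrightarrow> mu w c k = GEc k"
  by (simp add: mu_def GEc_def cy_take)
lemma mus_GGc: "k \<le> length c \<Longrightarrow> mu_star w c k = GGc k"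
  by (simp add: mu_star_def GGc_def cy_take)
lemma cps_GGc: "cpow_star w c j = GGc (j * length c)"
  unfolding cpow_star_def GGc_def using npos by (simp add: cy_n map_concat rev_concat rev_map[symmetric])

lemma filter_GE: "filter isE (map GE xs) = map GE xs"
  by (induction xs) auto
lemma filter_GG: "filter isE (rev (map GG xs)) = rev (map GG xs)"
  by (induction xs) auto

lemma pvc0: "src E (c ! 0) = w" using pv0 by (simp add: pv_def)

lemma cy_ne: "cy m \<noteq> [] \<longleftrightarrow> 0 < m"
  by (metis cy_len length_greater_0_conv)

lemma GEc_props:
  "GEc m \<noteq> []" "gok E (GEc m)" "coh E (GEc m)" "lstart E (hd (GEc m)) = w"
  "lend E (last (GEc m)) = pv m" "filter isE (GEc m) = map GE (cy m)"
proof -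
  show "GEc m \<noteq> []" by (simp add: GEc_def cy_ne)
  show "gok E (GEc m)" using w_verts cy_edges by (simp add: GEc_def gen_ok_def)
  show "coh E (GEc m)" using epath_cy by (simp add: GEc_def coh_map_GE)
  show "lstart E (hd (GEc m)) = w"
    by (cases "m = 0") (simp_all add: GEc_def hd_map cy_ne cy_hd pvc0)
  show "lend E (last (GEc m)) = pv m"
    by (cases "m = 0") (simp_all add: GEc_def last_map cy_ne rng_last_cy pv0)
  show "filter isE (GEc m) = map GE (cy m)"
    by (cases "m = 0") (simp_all add: GEc_def filter_GE)
qed

lemma GGc_props:
  "GGc m \<noteq> []" "gok E (GGc m)" "coh E (GGc m)" "lstart E (hd (GGc m)) = pv m"
  "lend E (last (GGc m)) = w" "filter isE (GGc m) = rev (map GG (cy m))"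
proof -
  show "GGc m \<noteq> []" by (simp add: GGc_def cy_ne)
  show "gok E (GGc m)" using w_verts cy_edges by (simp add: GGc_def gen_ok_def)
  show "coh E (GGc m)" using epath_cy by (simp add: GGc_def coh_rev_GG)
  show "lstart E (hd (GGc m)) = pv m"
    by (cases "m = 0") (simp_all add: GGc_def hd_rev last_map cy_ne rng_last_cy pv0)
  show "lend E (last (GGc m)) = w"
    by (cases "m = 0") (simp_all add: GGc_def last_rev hd_map cy_ne cy_hd pvc0)
  show "filter isE (GGc m) = rev (map GG (cy m))"
    by (cases "m = 0") (simp_all add: GGc_def filter_GG)
qed

lemma Tw_eq: "k \<le> length c \<Longrightarrow> Tw i j k = GEc (i * length c) @ GEc k @ GGc k @ GGc (j * length c)"
  by (simp add: Tw_def cpow_GEc mu_GEc mus_GGc cps_GGc)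

lemma Tw_props:
  assumes "k \<le> length c"
  shows "Tw i j k \<noteq> []" "gok E (Tw i j k)" "coh E ([GV w, GV w] @ Tw i j k)"
    "lstart E (hd (Tw i j k)) = w" "lend E (last (Tw i j k)) = w" "2 \<le> length (Tw i j k)"
    "filter isE (Tw i j k) = map GE (cy (i * length c + k)) @ rev (map GG (cy (j * length c + k)))"
proof -
  note A = GEc_props[of "i * length c"] and B = GEc_props[of k] and C = GGc_props[of k]
    and D = GGc_props[of "j * length c"]
  note T = Tw_eq[OF assms, of i j]
  show "Tw i j k \<noteq> []" using A unfolding T by simp
  show "gok E (Tw i j k)" using A B C D unfolding T by simp
  show "coh E ([GV w, GV w] @ Tw i j k)" using A B C D unfolding T
    by (simp add: coh_append coh_Cons pv_mult)
  show "lstart E (hd (Tw i j k)) = w" using A unfolding T by simp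
  show "lend E (last (Tw i j k)) = w" using D unfolding T by simp
  have "length (GEc (i * length c)) \<ge> 1" "length (GEc k) \<ge> 1"
    using A(1) B(1) by (simp_all add: Suc_le_eq)
  then show "2 \<le> length (Tw i j k)" unfolding T by simp
  show "filter isE (Tw i j k) = map GE (cy (i * length c + k)) @ rev (map GG (cy (j * length c + k)))"
    using A B C D unfolding T by (simp add: cy_mult)
qed

lemma pre_w:
  assumes "gok E T" "2 \<le> length T" "lstart E (hd T) = w"
  shows "eqv E X (wmono (GV w # T) :: ('v,'e,'k::field) fa) (wmono T)"
proof -
  obtain l T' where T0: "T = l # T'" using assms(2) by (cases T) auto
  then have T: "T = l # T'" "T' \<noteq> []" using assms(2) by auto
  have gl: "gen_ok E l" using assms(1) T by simp
  have "eqv E X (wmono ([] @ [GV (lstart E l), l] @ T') :: ('v,'e,'k::field) fa) (wmono ([] @ [l] @ T'))"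
    by (rule rw) (use assms T R_start[OF wf gl] in auto)
  then show ?thesis using T assms(3) by simp
qed

lemma T_SW:
  assumes "k < length c"
  shows "eqv E X (wmono (Tw i j k) :: ('v,'e,'k::field) fa) (wmono (SW (i * length c + k) (cy (j * length c + k))))"
proof -
  note tp = Tw_props[OF less_imp_le[OF assms], of i j]
  have e1: "eqv E X (wmono (GV w # Tw i j k) :: ('v,'e,'k::field) fa) (wmono (Tw i j k))"
    by (rule pre_w) (use tp in auto)
  have e2: "eqv E X (wmono (GV w # GV w # Tw i j k) :: ('v,'e,'k::field) fa) (wmono (GV w # Tw i j k))"
    by (rule pre_w) (use tp w_verts in \<open>auto simp: gen_ok_def\<close>)
  have e3: "eqv E X (wmono ([GV w, GV w] @ Tw i j k) :: ('v,'e,'k::field) fa) (wmono ([GV w, GV w] @ filter isE (Tw i j k)))"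
    by (rule L1[OF wf]) (use tp w_verts in \<open>auto simp: gen_ok_def\<close>)
  have e3': "eqv E X (wmono (GV w # GV w # Tw i j k) :: ('v,'e,'k::field) fa) (wmono (SW (i * length c + k) (cy (j * length c + k))))"
    using e3 tp by (simp add: SW_def)
  show ?thesis using eqv_trans[OF eqv_sym[OF eqv_trans[OF e2 e1]] e3'] .
qed

lemma T_end:
  assumes "k < length c"
  shows "eqv E X (wmono (GV w # Tw i j k @ [GV w]) :: ('v,'e,'k::field) fa) (wmono (Tw i j k))"
proof -
  note tp = Tw_props[OF less_imp_le[OF assms], of i j]
  have e1: "eqv E X (wmono (GV w # (Tw i j k @ [GV w])) :: ('v,'e,'k::field) fa) (wmono (Tw i j k @ [GV w]))"
    by (rule pre_w) (use tp w_verts in \<open>auto simp: gen_ok_def\<close>)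
  have "eqv E X (wmono (Tw i j k @ GV (lend E (last (Tw i j k))) # []) :: ('v,'e,'k::field) fa) (wmono (Tw i j k @ []))"
    by (rule absorb[OF wf]) (use tp in auto)
  then have e2: "eqv E X (wmono (Tw i j k @ [GV w]) :: ('v,'e,'k::field) fa) (wmono (Tw i j k))"
    using tp by simp
  show ?thesis using eqv_trans[OF e1 e2] by simp
qed

lemma word_red:
  assumes u: "gok E u"
  shows "eqv E X (wmono (GV w # u @ [GV w]) :: ('v,'e,'k::field) fa) 0 \<or>
    (\<exists>i j k. k \<in> Iset \<and> eqv E X (wmono (GV w # u @ [GV w]) :: ('v,'e,'k) fa) (wmono (Tw i j k)))"
proof -
  have gw: "gen_ok E (GV w)" using w_verts by (simp add: gen_ok_def)
  have r: "(wmono [GV w, GV w] - wmono [GV w] :: ('v,'e,'k) fa) \<in> cohn_ideal E X"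
    using rel1[OF w_verts w_verts, where 'k='k and X=X] by simp
  have "eqv E X (wmono ([] @ [GV w, GV w] @ (u @ [GV w])) :: ('v,'e,'k) fa) (wmono ([] @ [GV w] @ (u @ [GV w])))"
    by (rule rw[OF _ _ _ r]) (use u gw in auto)
  then have e0: "eqv E X (wmono (GV w # u @ [GV w]) :: ('v,'e,'k) fa) (wmono (GV w # GV w # u @ [GV w]))"
    by (simp add: eqv_sym)
  from reduce_main[OF u, where 'k='k] show ?thesis
  proof
    assume "eqv E X (wmono (GV w # GV w # u) :: ('v,'e,'k) fa) 0"
    from eqv_app[OF gw this] have "eqv E X (wmono (GV w # GV w # u @ [GV w]) :: ('v,'e,'k) fa) 0"
      by (simp only: ctx_zero append_Cons)
    then show ?thesis using eqv_trans[OF e0] by blast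
  next
    assume "\<exists>a q. valid a q \<and> eqv E X (wmono (GV w # GV w # u) :: ('v,'e,'k) fa) (wmono (SW a q))"
    then obtain a q where aq: "valid a q" "eqv E X (wmono (GV w # GV w # u) :: ('v,'e,'k) fa) (wmono (SW a q))"
      by blast
    from eqv_app[OF gw aq(2)] have e1: "eqv E X (wmono (GV w # GV w # u @ [GV w]) :: ('v,'e,'k) fa) (wmono (SW a q @ [GV w]))"
      by (simp add: ctx_wmono)
    from step_GV[OF aq(1) w_verts, where 'k='k] show ?thesis
    proof
      assume "eqv E X (wmono (SW a q @ [GV w]) :: ('v,'e,'k) fa) 0"
      then show ?thesis using eqv_trans[OF e0 eqv_trans[OF e1]] by blast
    next
      assume h: "endv a q = w \<and> eqv E X (wmono (SW a q @ [GV w]) :: ('v,'e,'k) fa) (wmono (SW a q))"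
      obtain b where b: "q = cy b" "a mod length c = b mod length c"
        using final_shape[OF aq(1)] h by blast
      obtain a' b' where ab: "a' mod length c = b' mod length c" "a' mod length c \<in> Iset"
        "eqv E X (wmono (SW a (cy b)) :: ('v,'e,'k) fa) (wmono (SW a' (cy b')))"
        using inorm[OF b(2), where 'k='k] by blast
      define k where "k = a' mod length c"
      have k: "k < length c" using npos by (simp add: k_def)
      have "a' div length c * length c + k = a'" by (simp add: k_def)
      moreover have "b' div length c * length c + k = b'" using ab(1) by (simp add: k_def)
      ultimately have "SW (a' div length c * length c + k) (cy (b' div length c * length c + k)) = SW a' (cy b')"
        by simp
      then have e4: "eqv E X (wmono (SW a' (cy b')) :: ('v,'e,'k) fa) (wmono (Tw (a' div length c) (b' div length c) k))"
        using T_SW[OF k, of "a' div length c" "b' div length c", where 'k='k] by (simp add: eqv_sym)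
      have "eqv E X (wmono (GV w # u @ [GV w]) :: ('v,'e,'k) fa) (wmono (Tw (a' div length c) (b' div length c) k))"
        using eqv_trans[OF e0 eqv_trans[OF e1 eqv_trans[OF conjunct2[OF h] eqv_trans[OF _ e4]]]] ab(3) b(1)
        by simp
      then show ?thesis using ab(2) k_def by blast
    qed
  qed
qed

end


context cs
begin

lemma wxw_expand:
  assumes "x \<in> fa_elems E"
  shows "fmul (fmul (wmono [GV w]) x) (wmono [GV w]) =
    (\<Sum>u\<in>{u. x u \<noteq> 0}. smul (x u) (wmono (GV w # u @ [GV w])) :: ('v,'e,'k::field) fa)"
proof -
  define S where "S = (\<Sum>u\<in>{u. x u \<noteq> 0}. smul (x u) (wmono u) :: ('v,'e,'k) fa)"
  have "x = S" unfolding S_def by (rule fa_expand[OF assms])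
  then have "fmul (fmul (wmono [GV w]) x) (wmono [GV w]) = fmul (fmul (wmono [GV w]) S) (wmono [GV w])"
    by simp
  also have "\<dots> = (\<Sum>u\<in>{u. x u \<noteq> 0}. smul (x u) (wmono (GV w # u @ [GV w])))"
    unfolding S_def by (simp only: fmul_sum_left fmul_sum_right fmul_smul_left fmul_smul_right fmul_wmono
        append_Cons append_Nil)
  finally show ?thesis .
qed

definition Tp :: "nat \<times> nat \<times> nat \<Rightarrow> ('v,'e) gen list" where
  "Tp p = Tw (fst p) (fst (snd p)) (snd (snd p))"

lemma lhs_sub:
  assumes xf: "x \<in> fa_elems E"
  shows "\<exists>(l :: nat \<Rightarrow> nat \<Rightarrow> nat \<Rightarrow> 'k) t1 t2.
    eqv E X (fmul (fmul (wmono [GV w]) x) (wmono [GV w]) :: ('v,'e,'k::field) fa)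
      (\<Sum>i\<le>t1. \<Sum>j\<le>t2. \<Sum>k\<in>Iset. (\<lambda>z. l i j k * wmono (Tw i j k) z))"
proof -
  define U where "U = {u. x u \<noteq> 0}"
  have finU: "finite U" using xf by (simp add: U_def fa_elems_def)
  have gU: "\<And>u. u \<in> U \<Longrightarrow> gok E u" using xf by (auto simp: U_def fa_elems_def gok_def)
  define Z where "Z = {u \<in> U. eqv E X (wmono (GV w # u @ [GV w]) :: ('v,'e,'k) fa) 0}"
  define U' where "U' = U - Z"
  define tr where "tr u = (SOME p. snd (snd p) \<in> Iset \<and>
      eqv E X (wmono (GV w # u @ [GV w]) :: ('v,'e,'k) fa) (wmono (Tp p)))" for u
  have trP: "snd (snd (tr u)) \<in> Iset \<and> eqv E X (wmono (GV w # u @ [GV w]) :: ('v,'e,'k) fa) (wmono (Tp (tr u)))"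
    if u: "u \<in> U'" for u
  proof -
    have "\<not> eqv E X (wmono (GV w # u @ [GV w]) :: ('v,'e,'k) fa) 0" using u by (simp add: U'_def Z_def)
    then obtain i j k where "k \<in> Iset" "eqv E X (wmono (GV w # u @ [GV w]) :: ('v,'e,'k) fa) (wmono (Tw i j k))"
      using word_red[OF gU, of u] u by (auto simp: U'_def)
    then have "\<exists>p. snd (snd p) \<in> Iset \<and> eqv E X (wmono (GV w # u @ [GV w]) :: ('v,'e,'k) fa) (wmono (Tp p))"
      by (intro exI[of _ "(i,j,k)"]) (simp add: Tp_def)
    then show ?thesis unfolding tr_def by (rule someI_ex)
  qed
  define t1 where "t1 = Max (insert 0 ((\<lambda>u. fst (tr u)) ` U'))"
  define t2 where "t2 = Max (insert 0 ((\<lambda>u. fst (snd (tr u))) ` U'))"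
  define Box where "Box = {..t1} \<times> ({..t2} \<times> Iset)"
  define L where "L p = (\<Sum>u\<in>{u. u \<in> U' \<and> tr u = p}. x u)" for p
  define l where "l i j k = L (i, j, k)" for i j k
  have finU': "finite U'" using finU by (simp add: U'_def)
  have finBox: "finite Box" using Iset_fin by (simp add: Box_def)
  have trBox: "tr ` U' \<subseteq> Box"
  proof
    fix p assume "p \<in> tr ` U'"
    then obtain u where u: "u \<in> U'" "p = tr u" by blast
    have "fst (tr u) \<le> t1" unfolding t1_def using finU' u by (intro Max_ge) auto
    moreover have "fst (snd (tr u)) \<le> t2" unfolding t2_def using finU' u by (intro Max_ge) auto
    moreover have "snd (snd (tr u)) \<in> Iset" using trP[OF u(1)] by simp
    ultimately show "p \<in> Box" using u by (simp add: Box_def mem_Times_iff)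
  qed
  define G :: "('v,'e) gen list \<Rightarrow> ('v,'e,'k) fa" where "G u = (if u \<in> Z then 0 else wmono (Tp (tr u)))" for u
  have eA: "eqv E X (fmul (fmul (wmono [GV w]) x) (wmono [GV w]) :: ('v,'e,'k) fa)
      (\<Sum>u\<in>U. smul (x u) (G u))"
    unfolding wxw_expand[OF xf] U_def[symmetric]
  proof (rule eqv_sum, rule eqv_smul)
    fix u assume u: "u \<in> U"
    show "eqv E X (wmono (GV w # u @ [GV w]) :: ('v,'e,'k) fa) (G u)"
    proof (cases "u \<in> Z")
      case True then show ?thesis by (simp add: G_def Z_def)
    next
      case False then have "u \<in> U'" using u by (simp add: U'_def)
      then show ?thesis using trP False by (simp add: G_def)
    qed
  qed
  have eB: "(\<Sum>u\<in>U. smul (x u) (G u)) = (\<Sum>u\<in>U'. smul (x u) (wmono (Tp (tr u))))"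
    by (rule sum.mono_neutral_cong_right[OF finU]) (auto simp: U'_def G_def)
  have eC: "(\<Sum>u\<in>U'. smul (x u) (wmono (Tp (tr u))) :: ('v,'e,'k) fa) =
      (\<Sum>p\<in>Box. \<Sum>u\<in>{u. u \<in> U' \<and> tr u = p}. smul (x u) (wmono (Tp (tr u))))"
    by (rule sum.group[OF finU' finBox trBox, symmetric])
  have eD: "(\<Sum>u\<in>{u. u \<in> U' \<and> tr u = p}. smul (x u) (wmono (Tp (tr u))) :: ('v,'e,'k) fa) =
      smul (L p) (wmono (Tp p))" for p
  proof -
    have "(\<Sum>u\<in>{u. u \<in> U' \<and> tr u = p}. smul (x u) (wmono (Tp (tr u))) :: ('v,'e,'k) fa) =
        (\<Sum>u\<in>{u. u \<in> U' \<and> tr u = p}. smul (x u) (wmono (Tp p)))"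
      by (rule sum.cong) auto
    then show ?thesis by (simp add: L_def smul_sum_scalar)
  qed
  have eE: "(\<Sum>p\<in>Box. smul (L p) (wmono (Tp p)) :: ('v,'e,'k) fa) =
      (\<Sum>i\<le>t1. \<Sum>j\<le>t2. \<Sum>k\<in>Iset. (\<lambda>z. l i j k * wmono (Tw i j k) z))"
  proof -
    have "(\<Sum>i\<le>t1. \<Sum>j\<le>t2. \<Sum>k\<in>Iset. (\<lambda>z. l i j k * wmono (Tw i j k) z)) =
        (\<Sum>i\<le>t1. \<Sum>j\<le>t2. \<Sum>k\<in>Iset. (\<lambda>p. smul (L p) (wmono (Tp p)) :: ('v,'e,'k) fa) (i, j, k))"
      by (simp add: l_def smul_def Tp_def)
    also have "\<dots> = (\<Sum>i\<le>t1. \<Sum>jk\<in>{..t2} \<times> Iset. (\<lambda>p. smul (L p) (wmono (Tp p)) :: ('v,'e,'k) fa) (i, jk))"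
      by (simp add: sum.cartesian_product)
    also have "\<dots> = (\<Sum>p\<in>Box. smul (L p) (wmono (Tp p)))"
      unfolding Box_def by (simp add: sum.cartesian_product)
    finally show ?thesis by simp
  qed
  have "eqv E X (fmul (fmul (wmono [GV w]) x) (wmono [GV w]) :: ('v,'e,'k) fa)
      (\<Sum>i\<le>t1. \<Sum>j\<le>t2. \<Sum>k\<in>Iset. (\<lambda>z. l i j k * wmono (Tw i j k) z))"
    using eA unfolding eB eC eD eE .
  then show ?thesis by blast
qed

lemma rhs_sub:
  fixes l :: "nat \<Rightarrow> nat \<Rightarrow> nat \<Rightarrow> 'k::field" and t1 t2 :: nat
  defines "S \<equiv> (\<Sum>i\<le>t1. \<Sum>j\<le>t2. \<Sum>k\<in>Iset. (\<lambda>z. l i j k * wmono (Tw i j k) z)) :: ('v,'e,'k) fa"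
  shows "S \<in> fa_elems E" "eqv E X (fmul (fmul (wmono [GV w]) S) (wmono [GV w])) S"
proof -
  have S: "S = (\<Sum>i\<le>t1. \<Sum>j\<le>t2. \<Sum>k\<in>Iset. smul (l i j k) (wmono (Tw i j k)))"
    unfolding S_def smul_def ..
  have kI: "\<And>k. k \<in> Iset \<Longrightarrow> k < length c" by (rule Iset_lt)
  have tw: "\<And>i j k. k \<in> Iset \<Longrightarrow> Tw i j k \<noteq> [] \<and> gok E (Tw i j k)"
    using Tw_props(1,2) kI less_imp_le by blast
  show "S \<in> fa_elems E" unfolding S
    by (intro fa_sum fa_smul fa_wmono) (use tw in auto)
  have eq: "fmul (fmul (wmono [GV w]) S) (wmono [GV w]) =
      (\<Sum>i\<le>t1. \<Sum>j\<le>t2. \<Sum>k\<in>Iset. smul (l i j k) (wmono (GV w # Tw i j k @ [GV w])))"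
    unfolding S by (simp only: fmul_sum_left fmul_sum_right fmul_smul_left fmul_smul_right fmul_wmono
        append_Cons append_Nil)
  have "eqv E X (\<Sum>i\<le>t1. \<Sum>j\<le>t2. \<Sum>k\<in>Iset. smul (l i j k) (wmono (GV w # Tw i j k @ [GV w]))) S"
    unfolding S by (intro eqv_sum eqv_smul T_end kI)
  then show "eqv E X (fmul (fmul (wmono [GV w]) S) (wmono [GV w])) S" unfolding eq .
qed

lemma corner_eq:
  "(corner E X w :: ('v,'e,'k::field) fa set set) =
    {cohn_cls E X (\<Sum>i\<le>t1. \<Sum>j\<le>t2. \<Sum>k\<in>Iset. (\<lambda>z. l i j k * wmono (Tw i j k) z))
     | (l :: nat \<Rightarrow> nat \<Rightarrow> nat \<Rightarrow> 'k) t1 t2. True}" (is "?L = ?R")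
proof (intro equalityI subsetI)
  fix y assume "y \<in> ?L"
  then obtain x where x: "x \<in> fa_elems E" "y = cohn_cls E X (fmul (fmul (wmono [GV w]) x) (wmono [GV w]))"
    by (auto simp: corner_def)
  from lhs_sub[OF x(1)] obtain l t1 t2 where
    e: "eqv E X (fmul (fmul (wmono [GV w]) x) (wmono [GV w]) :: ('v,'e,'k) fa)
      (\<Sum>i\<le>t1. \<Sum>j\<le>t2. \<Sum>k\<in>Iset. (\<lambda>z. l i j k * wmono (Tw i j k) z))" by blast
  have "y = cohn_cls E X (\<Sum>i\<le>t1. \<Sum>j\<le>t2. \<Sum>k\<in>Iset. (\<lambda>z. l i j k * wmono (Tw i j k) z))"
    using x(2) cls_eq[OF J0_J[OF e[unfolded eqv_def]]] by simp
  then show "y \<in> ?R" by blast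
next
  fix y assume "y \<in> ?R"
  then obtain l :: "nat \<Rightarrow> nat \<Rightarrow> nat \<Rightarrow> 'k" and t1 t2 where
    y: "y = cohn_cls E X (\<Sum>i\<le>t1. \<Sum>j\<le>t2. \<Sum>k\<in>Iset. (\<lambda>z. l i j k * wmono (Tw i j k) z))" by blast
  note r = rhs_sub[of l t2 t1]
  have "y = cohn_cls E X (fmul (fmul (wmono [GV w])
      (\<Sum>i\<le>t1. \<Sum>j\<le>t2. \<Sum>k\<in>Iset. (\<lambda>z. l i j k * wmono (Tw i j k) z))) (wmono [GV w]))"
    using y cls_eq[OF J0_J[OF r(2)[unfolded eqv_def]]] by simp
  then show "y \<in> ?L" using r(1) unfolding corner_def by blast
qed

end

theorem mainTheorem1:
  fixes E :: "('v,'e) graph" and X :: "'v set" and c :: "'e list" and w :: 'v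
  assumes "wf_graph E"
    and "X \<subseteq> Reg E"
    and "is_cycle E c" and "no_exit E c" and "w = src E (hd c)"
  shows "(corner E X w :: ('v,'e,'k::field) fa set set) =
    {cohn_cls E X
       (\<Sum>i\<le>t1. \<Sum>j\<le>t2.
          \<Sum>k\<in>{0} \<union> {k. 1 \<le> k \<and> k < length c \<and> src E (c ! (k - 1)) \<in> Reg E - X}.
            (\<lambda>z. l i j k * wmono (cpow w c i @ mu w c k @ mu_star w c k @ cpow_star w c j) z))
     | (l :: nat \<Rightarrow> nat \<Rightarrow> nat \<Rightarrow> 'k) t1 t2. True}"
proof -
  interpret cs E X c w using assms by unfold_locales
  show ?thesis using corner_eq unfolding Iset_def Tw_def .
qed


end
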